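(* Let $\Gamma=\mathbb Q_{>0}$ be the multiplicative group of positive rationals, acting on the additive group $\mathbb Q$ (discrete) by $\widehat\rho(\gamma)(x)=\gamma x$, and let $\rho$ be the dual action of $\Gamma$ on the compact group $\widehat{\mathbb Q}$, i.e. $\rho(\gamma)(g)(x)=g(\gamma x)$ for $g\in\widehat{\mathbb Q}$, $x\in\mathbb Q$. Then $(\widehat{\mathbb Q},\rho)$ is expansive, but for no finitely generated subgroup $\Gamma_0\subset\Gamma$ is the restriction of $\rho$ to $\Gamma_0$ expansive.
   Context: $\widehat{\mathbb Q}$ is the Pontryagin dual of the discrete group $\mathbb Q$ (a one-dimensional solenoid). An action $\rho$ of $\Gamma$ on a metrizable topological group $X$ by continuous endomorphisms is expansive if there is a neighborhood $U$ of the identity with $\bigcap_{\gamma\in\Gamma}\rho(\gamma)^{-1}(U)=\{e\}$. *)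

theory Defs
  imports "HOL-Analysis.Analysis"
begin

text \<open>The Pontryagin dual of the discrete group (rat,+): characters into the unit circle
  of the complex plane, with the topology of pointwise convergence (= compact-open topology,
  since rat is discrete), i.e. the subspace topology of the product topology on rat => complex.\<close>
definition rat_dual :: "(rat \<Rightarrow> complex) set" where
  "rat_dual = {g. (\<forall>x y. g (x + y) = g x * g y) \<and> (\<forall>x. norm (g x) = 1)}"

definition rho :: "rat \<Rightarrow> (rat \<Rightarrow> complex) \<Rightarrow> (rat \<Rightarrow> complex)" where
  "rho \<gamma> g = (\<lambda>x. g (\<gamma> * x))"

definition expansive :: "'g set \<Rightarrow> ('g \<Rightarrow> 'x \<Rightarrow> 'x) \<Rightarrow> 'x::topological_space set \<Rightarrow> 'x \<Rightarrow> bool" where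
  "expansive G act X e \<longleftrightarrow>
     (\<exists>U. U \<subseteq> X \<and> (\<exists>V. open V \<and> e \<in> V \<and> V \<inter> X \<subseteq> U) \<and>
          (\<Inter>\<gamma>\<in>G. {x \<in> X. act \<gamma> x \<in> U}) = {e})"

definition pos_rat_subgroup :: "rat set \<Rightarrow> bool" where
  "pos_rat_subgroup H \<longleftrightarrow> H \<subseteq> {q. q > 0} \<and> 1 \<in> H \<and>
     (\<forall>a\<in>H. \<forall>b\<in>H. a * b \<in> H) \<and> (\<forall>a\<in>H. inverse a \<in> H)"

definition fg_pos_rat_subgroup :: "rat set \<Rightarrow> bool" where
  "fg_pos_rat_subgroup H \<longleftrightarrow> pos_rat_subgroup H \<and>
     (\<exists>S. finite S \<and> S \<subseteq> H \<and> (\<forall>K. pos_rat_subgroup K \<and> S \<subseteq> K \<longrightarrow> H \<subseteq> K))"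

end

theory Submission
  imports Defs "HOL-Computational_Algebra.Primes"
begin


definition Zp :: "int \<Rightarrow> rat set" where
  "Zp p = {q. \<exists>a b. b \<noteq> 0 \<and> \<not> p dvd b \<and> q = of_int a / of_int b}"

definition Dp :: "int \<Rightarrow> rat set" where
  "Dp p = {q. \<exists>k n. q = of_int k / of_int p ^ n}"

lemma Zp_int: "of_int m \<in> Zp p" if "prime p"
proof -
  have "\<not> p dvd 1" using that not_prime_unit by blast
  then show ?thesis unfolding Zp_def
    by (intro CollectI exI[of _ m] exI[of _ 1]) simp
qed

lemma Zp_add: assumes "prime p" "x \<in> Zp p" "y \<in> Zp p" shows "x + y \<in> Zp p"
proof -
  obtain a b c d where x: "b \<noteq> 0" "\<not> p dvd b" "x = of_int a / of_int b"
     and y: "d \<noteq> 0" "\<not> p dvd d" "y = of_int c / of_int d" using assms unfolding Zp_def by auto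
  have "x + y = of_int (a*d + c*b) / of_int (b*d)" using x y by (simp add: field_simps)
  moreover have "\<not> p dvd b*d" using x y assms prime_dvd_mult_iff by blast
  ultimately show ?thesis unfolding Zp_def using x y
    by (intro CollectI exI[of _ "a*d+c*b"] exI[of _ "b*d"]) auto
qed

lemma Zp_mult: assumes "prime p" "x \<in> Zp p" "y \<in> Zp p" shows "x * y \<in> Zp p"
proof -
  obtain a b c d where x: "b \<noteq> 0" "\<not> p dvd b" "x = of_int a / of_int b"
     and y: "d \<noteq> 0" "\<not> p dvd d" "y = of_int c / of_int d" using assms unfolding Zp_def by auto
  have "x * y = of_int (a*c) / of_int (b*d)" using x y by (simp add: field_simps)
  moreover have "\<not> p dvd b*d" using x y assms prime_dvd_mult_iff by blast
  ultimately show ?thesis unfolding Zp_def using x y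
    by (intro CollectI exI[of _ "a*c"] exI[of _ "b*d"]) auto
qed

lemma Zp_uminus: assumes "x \<in> Zp p" shows "- x \<in> Zp p"
proof -
  obtain a b where x: "b \<noteq> 0" "\<not> p dvd b" "x = of_int a / of_int b"
     using assms unfolding Zp_def by auto
  have "-x = of_int (-a) / of_int b" using x by simp
  then show ?thesis unfolding Zp_def using x by blast
qed

lemma Zp_diff: assumes "prime p" "x \<in> Zp p" "y \<in> Zp p" shows "x - y \<in> Zp p"
  using Zp_add[OF assms(1,2) Zp_uminus[OF assms(3)]] by simp

lemma Dp_diff: assumes "prime p" "x \<in> Dp p" "y \<in> Dp p" shows "x - y \<in> Dp p"
proof -
  obtain k n k' n' where x: "x = of_int k / of_int p ^ n" and y: "y = of_int k' / of_int p ^ n'"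
    using assms unfolding Dp_def by auto
  have p0: "(of_int p :: rat) \<noteq> 0" using assms by auto
  have "x - y = of_int (k * p ^ n' - k' * p ^ n) / of_int p ^ (n + n')"
    unfolding x y using p0 by (simp add: field_simps power_add)
  then show ?thesis unfolding Dp_def by blast
qed

lemma Dp_add: assumes "prime p" "x \<in> Dp p" "y \<in> Dp p" shows "x + y \<in> Dp p"
proof -
  obtain k n k' n' where x: "x = of_int k / of_int p ^ n" and y: "y = of_int k' / of_int p ^ n'"
    using assms unfolding Dp_def by auto
  have p0: "(of_int p :: rat) \<noteq> 0" using assms by auto
  have "x + y = of_int (k * p ^ n' + k' * p ^ n) / of_int p ^ (n + n')"
    unfolding x y using p0 by (simp add: field_simps power_add)
  then show ?thesis unfolding Dp_def by blast
qed

lemma Zp_Dp_int: assumes "prime p" "x \<in> Zp p" "x \<in> Dp p" shows "\<exists>m. x = of_int m"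
proof -
  obtain a b where x: "b \<noteq> 0" "\<not> p dvd b" "x = of_int a / of_int b"
     using assms unfolding Zp_def by auto
  obtain k n where x2: "x = of_int k / of_int p ^ n" using assms unfolding Dp_def by auto
  have p0: "(of_int p :: rat) \<noteq> 0" using assms by auto
  have "of_int k / of_int p ^ n = (of_int a / of_int b :: rat)" using x x2 by simp
  then have "of_int k * of_int b = (of_int a * of_int p ^ n :: rat)" using p0 x(1)
    by (simp add: field_simps)
  then have "of_int (k * b) = (of_int (a * p ^ n) :: rat)" by simp
  then have e: "k * b = a * p ^ n" by (simp only: of_int_eq_iff)
  have "p ^ n dvd k * b" unfolding e by simp
  moreover have "coprime (p ^ n) b" using x(2) assms(1)
    by (simp add: prime_imp_coprime)
  ultimately have "p ^ n dvd k" using coprime_dvd_mult_left_iff by blast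
  then obtain m where "k = p ^ n * m" by blast
  then have "x = of_int m" using x2 p0 by simp
  then show ?thesis by blast
qed

lemma decomp: assumes "prime p" shows "\<exists>r \<in> Dp p. x - r \<in> Zp p"
proof -
  obtain a b where ab: "quotient_of x = (a, b)" by (cases "quotient_of x")
  have b0: "b > 0" using ab quotient_of_denom_pos by blast
  have xab: "x = of_int a / of_int b" using ab quotient_of_div by blast
  have nu: "\<not> is_unit p" using assms not_prime_unit by blast
  obtain c where c: "b = p ^ multiplicity p b * c" "\<not> p dvd c"
    using multiplicity_decompose'[of b p] b0 nu by auto
  define m where "m = multiplicity p b"
  have c0: "c \<noteq> 0" using c b0 by auto
  have "coprime p c" using c(2) assms by (simp add: prime_imp_coprime)
  then have "coprime c (p ^ m)" by (simp add: coprime_commute)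
  then obtain u v where uv: "u * c + v * p ^ m = 1" using bezout_int[of c "p^m"] by auto
  have p0: "(of_int p :: rat) \<noteq> 0" using assms by auto
  have uvq: "of_int u * of_int c + of_int v * of_int p ^ m = (1::rat)"
  proof -
    have "(of_int (u * c + v * p ^ m) :: rat) = of_int 1" using uv by (simp only:)
    then show ?thesis by simp
  qed
  have bpm: "b = p ^ m * c" using c(1) m_def by simp
  have bq: "(of_int b :: rat) = of_int p ^ m * of_int c" unfolding bpm by simp
  have pm0: "(of_int p :: rat) ^ m \<noteq> 0" using p0 by simp
  have cq0: "(of_int c :: rat) \<noteq> 0" using c0 by simp
  have "x - of_int (a*u) / of_int p ^ m = of_int a * (1 - of_int u * of_int c) / (of_int p ^ m * of_int c)"
    unfolding xab bq using pm0 cq0 by (simp add: field_simps)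
  also have "1 - of_int u * of_int c = (of_int v * of_int p ^ m :: rat)" using uvq by simp
  also have "of_int a * (of_int v * of_int p ^ m) / (of_int p ^ m * of_int c) = (of_int (a * v) / of_int c :: rat)"
    using p0 pm0 cq0 by (simp add: field_simps)
  finally have "x - of_int (a*u) / of_int p ^ m = of_int (a * v) / of_int c" .
  moreover have "of_int (a*u) / of_int p ^ m \<in> Dp p" unfolding Dp_def by blast
  moreover have "of_int (a * v) / of_int c \<in> Zp p" unfolding Zp_def using c0 c(2) by blast
  ultimately show ?thesis by metis
qed



definition E :: "real \<Rightarrow> complex" where
  "E t = exp (2 * of_real pi * \<i> * of_real t)"

lemma E_add: "E (s + t) = E s * E t"
  unfolding E_def by (simp add: distrib_left exp_add)

lemma E_int: "E (of_int m) = 1"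
proof -
  have "2 * of_real pi * \<i> * of_real (of_int m) = \<i> * (of_int m * (of_real pi * 2))"
    by simp
  then show ?thesis unfolding E_def by (metis exp_2pi_1_int)
qed

lemma E_norm: "norm (E t) = 1"
proof -
  have "2 * of_real pi * \<i> * of_real t = \<i> * of_real (2 * pi * t)" by simp
  then show ?thesis unfolding E_def by (metis norm_exp_i_times)
qed

lemma E_one: assumes "E t = 1" shows "\<exists>n::int. t = of_int n"
proof -
  from assms obtain n :: int where "Im (2 * of_real pi * \<i> * of_real t) = of_int (2 * n) * pi"
    unfolding E_def exp_eq_1 by blast
  then have "2 * pi * t = 2 * of_int n * pi" by simp
  then have "t = of_int n" using pi_gt_zero by (simp add: field_simps)
  then show ?thesis by blast
qed

definition chi :: "int \<Rightarrow> rat \<Rightarrow> complex" where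
  "chi p x = E (of_rat (SOME r. r \<in> Dp p \<and> x - r \<in> Zp p))"

lemma chi_eq: assumes "prime p" "r \<in> Dp p" "x - r \<in> Zp p" shows "chi p x = E (of_rat r)"
proof -
  define s where "s = (SOME r. r \<in> Dp p \<and> x - r \<in> Zp p)"
  have "s \<in> Dp p \<and> x - s \<in> Zp p" unfolding s_def
    by (rule someI_ex) (use decomp[OF assms(1), of x] in blast)
  then have s: "s \<in> Dp p" "x - s \<in> Zp p" by auto
  have "r - s \<in> Dp p" using Dp_diff assms s by blast
  moreover have "r - s = (x - s) - (x - r)" by simp
  then have "r - s \<in> Zp p" using Zp_diff assms s by metis
  ultimately obtain m where m: "r - s = of_int m" using Zp_Dp_int assms by blast
  have "(of_rat r :: real) = of_rat s + of_int m"
    using m by (metis add.commute diff_add_cancel of_rat_add of_rat_of_int_eq)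
  then have "E (of_rat r) = E (of_rat s)" by (simp add: E_add E_int)
  then show ?thesis unfolding chi_def s_def by simp
qed

lemma chi_exists: assumes "prime p" obtains r where "r \<in> Dp p" "x - r \<in> Zp p" "chi p x = E (of_rat r)"
  using decomp[OF assms, of x] chi_eq[OF assms] by blast

lemma chi_add: assumes "prime p" shows "chi p (x + y) = chi p x * chi p y"
proof -
  obtain r where r: "r \<in> Dp p" "x - r \<in> Zp p" "chi p x = E (of_rat r)" using chi_exists assms by blast
  obtain s where s: "s \<in> Dp p" "y - s \<in> Zp p" "chi p y = E (of_rat s)" using chi_exists assms by blast
  have "r + s \<in> Dp p" using Dp_add assms r s by blast
  moreover have "(x + y) - (r + s) = (x - r) + (y - s)" by simp
  then have "(x + y) - (r + s) \<in> Zp p" using Zp_add assms r s by metis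
  ultimately have "chi p (x + y) = E (of_rat (r + s))" using chi_eq assms by blast
  then show ?thesis using r s by (simp add: of_rat_add E_add)
qed

lemma chi_norm: assumes "prime p" shows "norm (chi p x) = 1"
  using chi_exists[OF assms, of x] E_norm by metis

lemma chi_Zp: assumes "prime p" "x \<in> Zp p" shows "chi p x = 1"
proof -
  have "0 \<in> Dp p" unfolding Dp_def by (intro CollectI exI[of _ 0] exI[of _ 0]) simp
  then have "chi p x = E (of_rat 0)" using chi_eq assms by simp
  also have "\<dots> = 1" using E_int[of 0] by simp
  finally show ?thesis .
qed

lemma chi_inv: assumes "prime p" shows "chi p (1 / of_int p) \<noteq> 1"
proof
  assume h: "chi p (1 / of_int p) = 1"
  have "1 / of_int p \<in> Dp p" unfolding Dp_def by (intro CollectI exI[of _ 1] exI[of _ 1]) simp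
  moreover have "1 / of_int p - 1 / of_int p \<in> Zp p" using Zp_int[OF assms, of 0] by simp
  ultimately have "chi p (1 / of_int p) = E (of_rat (1 / of_int p))" using chi_eq assms by blast
  then obtain n :: int where "(of_rat (1 / of_int p) :: real) = of_int n" using E_one h by metis
  then have "(1 / of_int p :: rat) = of_int n" by (metis of_rat_eq_iff of_rat_of_int_eq)
  then have "(of_int (p * n) :: rat) = of_int 1" using assms prime_gt_0_int[OF assms]
    by (simp add: field_simps)
  then have "p * n = 1" by (simp only: of_int_eq_iff)
  then have "p dvd 1" by (metis dvd_triv_left)
  then show False using assms not_prime_unit by blast
qed

lemma circle_pow: fixes z :: complex assumes "norm z = 1" "\<And>n. n \<ge> 1 \<Longrightarrow> Re (z ^ n) > 0"
  shows "z = 1"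
proof (rule ccontr)
  assume nz: "z \<noteq> 1"
  define \<theta> where "\<theta> = Arg z"
  have z0: "z \<noteq> 0" using assms by auto
  have zc: "z = cis \<theta>" unfolding \<theta>_def using cis_Arg[OF z0] assms by (simp add: sgn_div_norm)
  have th0: "\<theta> \<noteq> 0" using nz zc by auto
  define t where "t = \<bar>\<theta>\<bar>"
  have t: "0 < t" "t \<le> pi" using th0 Arg_bounded[of z] unfolding t_def \<theta>_def by auto
  define n where "n = nat \<lceil>pi / (2 * t)\<rceil>"
  have pos: "pi / (2 * t) > 0" using t by simp
  have n1: "n \<ge> 1" unfolding n_def using pos by linarith
  have eq: "real n = of_int \<lceil>pi / (2 * t)\<rceil>" unfolding n_def using pos by simp
  have nge: "real n \<ge> pi / (2 * t)" using eq ceiling_correct[of "pi / (2 * t)"] by linarith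
  have nlt: "real n < pi / (2 * t) + 1" using eq ceiling_correct[of "pi / (2 * t)"] by linarith
  have a: "real n * t \<ge> pi / 2" using nge t by (simp add: field_simps)
  have b: "real n * t < pi / 2 + t" using nlt t by (simp add: field_simps)
  have "cos (real n * t - pi) \<ge> 0" using a b t by (intro cos_ge_zero) auto
  then have c: "cos (real n * t) \<le> 0" by simp
  have "Re (z ^ n) = cos (real n * \<theta>)" unfolding zc by (simp add: Complex.DeMoivre)
  also have "\<dots> = cos (real n * t)"
    unfolding t_def by (cases "\<theta> \<ge> 0") auto
  finally show False using assms(2)[OF n1] c by linarith
qed



lemma nbhd_finite:
  fixes V :: "(rat \<Rightarrow> complex) set"
  assumes "open V" "e \<in> V"
  shows "\<exists>F. finite F \<and> (\<forall>f. (\<forall>x\<in>F. f x = e x) \<longrightarrow> f \<in> V)"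
proof -
  have "openin (product_topology (\<lambda>i. euclidean) UNIV) V" using assms open_fun_def by metis
  from product_topology_open_contains_basis[OF this assms(2)]
  obtain X where X: "e \<in> (\<Pi>\<^sub>E i\<in>UNIV. X i)" "finite {i. X i \<noteq> UNIV}" "(\<Pi>\<^sub>E i\<in>UNIV. X i) \<subseteq> V"
    by auto
  have "f \<in> V" if "\<forall>x\<in>{i. X i \<noteq> UNIV}. f x = e x" for f
  proof -
    have "f i \<in> X i" for i
    proof (cases "X i = UNIV")
      case False then show ?thesis using that X(1) by (auto simp: PiE_iff)
    qed simp
    then have "f \<in> (\<Pi>\<^sub>E i\<in>UNIV. X i)" by (simp add: PiE_iff)
    then show ?thesis using X(3) by blast
  qed
  then show ?thesis using X(2) by blast
qed

lemma rho_dual: "g \<in> rat_dual \<Longrightarrow> rho \<gamma> g \<in> rat_dual"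
  unfolding rat_dual_def rho_def by (simp add: distrib_left)

lemma one_dual: "(\<lambda>_. 1) \<in> rat_dual"
  unfolding rat_dual_def by simp

lemma dual_pow: assumes "g \<in> rat_dual" shows "g (of_nat n * x) = g x ^ n"
proof (induction n)
  case 0
  have "g (0 + 0) = g 0 * g 0" using assms unfolding rat_dual_def by blast
  then have h: "g 0 = g 0 * g 0" by simp
  have "norm (g 0) = 1" using assms unfolding rat_dual_def by blast
  then have "g 0 \<noteq> 0" by auto
  with h have "g 0 = 1" using mult_cancel_left1 by blast
  then show ?case by simp
next
  case (Suc n)
  have "g (of_nat (Suc n) * x) = g (of_nat n * x + x)" by (simp add: distrib_right add.commute)
  also have "\<dots> = g (of_nat n * x) * g x" using assms unfolding rat_dual_def by blast
  finally show ?case using Suc by simp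
qed

lemma part1: "expansive {q::rat. q > 0} rho rat_dual (\<lambda>_. 1)"
proof -
  define U where "U = {f \<in> rat_dual. Re (f 1) > 0}"
  define V where "V = (\<lambda>f::rat \<Rightarrow> complex. f 1) -` {z. Re z > 0}"
  have oV: "open V" unfolding V_def
    by (intro open_vimage open_halfspace_Re_gt continuous_on_product_coordinates)
  have "(\<lambda>_. 1) \<in> V" unfolding V_def by simp
  moreover have "V \<inter> rat_dual \<subseteq> U" unfolding U_def V_def by auto
  moreover have "(\<Inter>\<gamma>\<in>{q::rat. q > 0}. {x \<in> rat_dual. rho \<gamma> x \<in> U}) = {\<lambda>_. 1}"
  proof
    show "{\<lambda>_. 1} \<subseteq> (\<Inter>\<gamma>\<in>{q::rat. q > 0}. {x \<in> rat_dual. rho \<gamma> x \<in> U})"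
      using one_dual unfolding U_def rho_def by auto
  next
    show "(\<Inter>\<gamma>\<in>{q::rat. q > 0}. {x \<in> rat_dual. rho \<gamma> x \<in> U}) \<subseteq> {\<lambda>_. 1}"
    proof
      fix g assume g: "g \<in> (\<Inter>\<gamma>\<in>{q::rat. q > 0}. {x \<in> rat_dual. rho \<gamma> x \<in> U})"
      have "(1::rat) \<in> {q::rat. q > 0}" by simp
      then have gd: "g \<in> rat_dual" using g by blast
      have pos: "Re (g \<gamma>) > 0" if "\<gamma> > 0" for \<gamma>
        using g that unfolding U_def rho_def by auto
      have g0: "g 0 = 1" using dual_pow[OF gd, of 0 0] by simp
      have gp: "g x = 1" if "x > 0" for x
      proof (rule circle_pow)
        show "norm (g x) = 1" using gd unfolding rat_dual_def by blast
        fix n :: nat assume "n \<ge> 1"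
        then have "of_nat n * x > 0" using that by simp
        then show "Re (g x ^ n) > 0" using pos dual_pow[OF gd] by metis
      qed
      have "g x = 1" for x
      proof (cases "x > 0")
        case True then show ?thesis using gp by blast
      next
        case False
        show ?thesis
        proof (cases "x = 0")
          case True then show ?thesis using g0 by simp
        next
          case False
          then have "-x > 0" using \<open>\<not> x > 0\<close> by simp
          then have "g (-x) = 1" using gp by blast
          moreover have "g (x + -x) = g x * g (-x)" using gd unfolding rat_dual_def by blast
          ultimately show ?thesis using g0 by simp
        qed
      qed
      then show "g \<in> {\<lambda>_. 1}" by auto
    qed
  qed
  moreover have "U \<subseteq> rat_dual" unfolding U_def by auto
  ultimately show ?thesis unfolding expansive_def using oV by blast
qed



lemma pow_Zp: assumes "prime p" shows "\<exists>m. \<forall>k\<ge>m. of_int p ^ k * x \<in> Zp p"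
proof -
  obtain r where r: "r \<in> Dp p" "x - r \<in> Zp p" using decomp[OF assms] by blast
  obtain k' n where kn: "r = of_int k' / of_int p ^ n" using r(1) unfolding Dp_def by blast
  have p0: "(of_int p :: rat) \<noteq> 0" using assms by auto
  have "of_int p ^ k * x \<in> Zp p" if "k \<ge> n" for k
  proof -
    have "(of_int p ^ k :: rat) = of_int p ^ (k - n) * of_int p ^ n"
      using that by (simp add: power_add[symmetric])
    then have "of_int p ^ k * r = of_int (k' * p ^ (k - n))"
      unfolding kn using p0 by simp
    then have a: "of_int p ^ k * r \<in> Zp p" using Zp_int[OF assms, of "k' * p ^ (k - n)"] by metis
    have b: "of_int p ^ k * (x - r) \<in> Zp p"
      using Zp_mult[OF assms _ r(2)] Zp_int[OF assms, of "p ^ k"] by simp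
    have "of_int p ^ k * x = of_int p ^ k * (x - r) + of_int p ^ k * r" by (simp add: algebra_simps)
    then show ?thesis using Zp_add[OF assms b a] by simp
  qed
  then show ?thesis by blast
qed

lemma part2: assumes "fg_pos_rat_subgroup H" shows "\<not> expansive H rho rat_dual (\<lambda>_. 1)"
proof
  assume ex: "expansive H rho rat_dual (\<lambda>_. 1)"
  have fg: "pos_rat_subgroup H \<and> (\<exists>S. finite S \<and> S \<subseteq> H \<and> (\<forall>K. pos_rat_subgroup K \<and> S \<subseteq> K \<longrightarrow> H \<subseteq> K))"
    using assms unfolding fg_pos_rat_subgroup_def .
  then obtain S where S: "finite S" "S \<subseteq> H" "\<forall>K. pos_rat_subgroup K \<and> S \<subseteq> K \<longrightarrow> H \<subseteq> K"
    by (elim conjE exE) (rule that)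
  have Hpos: "H \<subseteq> {q. q > 0}" using fg unfolding pos_rat_subgroup_def by (elim conjE)
  define N where "N = (\<Sum>s\<in>S. nat \<bar>fst (quotient_of s)\<bar> + nat (snd (quotient_of s)))"
  obtain p0 :: nat where p0: "prime p0" "p0 > N" using bigger_prime by blast
  define p where "p = int p0"
  have pp: "prime p" unfolding p_def using p0 by simp
  define K where "K = {q. q > 0 \<and> q \<in> Zp p \<and> inverse q \<in> Zp p}"
  have "pos_rat_subgroup K"
    unfolding pos_rat_subgroup_def
  proof (intro conjI ballI)
    show "K \<subseteq> {q. q > 0}" unfolding K_def by auto
    show "1 \<in> K" unfolding K_def using Zp_int[OF pp, of 1] by simp
    fix a b assume "a \<in> K" "b \<in> K"
    then show "a * b \<in> K" unfolding K_def using Zp_mult[OF pp]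
      by (auto simp: inverse_mult_distrib)
  next
    fix a assume "a \<in> K"
    then show "inverse a \<in> K" unfolding K_def by auto
  qed
  moreover have "S \<subseteq> K"
  proof
    fix s assume sS: "s \<in> S"
    obtain a b where ab: "quotient_of s = (a, b)" by (cases "quotient_of s")
    have b0: "b > 0" using ab quotient_of_denom_pos by blast
    have sab: "s = of_int a / of_int b" using ab quotient_of_div by blast
    have s0: "s > 0" using sS S(2) Hpos by blast
    then have a0: "a > 0" using b0 unfolding sab by (simp add: zero_less_divide_iff)
    have "nat \<bar>a\<bar> + nat b \<le> N" unfolding N_def
      using member_le_sum[of s S "\<lambda>s. nat \<bar>fst (quotient_of s)\<bar> + nat (snd (quotient_of s))"] sS S(1) ab
      by simp
    then have ap: "a < p" "b < p" unfolding p_def using p0 a0 b0 by linarith+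
    have na: "\<not> p dvd a" using ap a0 zdvd_imp_le by force
    have nb: "\<not> p dvd b" using ap b0 zdvd_imp_le by force
    have "s \<in> Zp p" unfolding Zp_def using sab nb b0 by (intro CollectI exI[of _ a] exI[of _ b]) simp
    moreover have "inverse s \<in> Zp p" unfolding Zp_def using sab na a0
      by (intro CollectI exI[of _ b] exI[of _ a]) simp
    ultimately show "s \<in> K" unfolding K_def using s0 by blast
  qed
  ultimately have HK: "H \<subseteq> K" using S(3) by blast
  obtain U where U: "U \<subseteq> rat_dual" "\<exists>V. open V \<and> (\<lambda>_. 1) \<in> V \<and> V \<inter> rat_dual \<subseteq> U"
    "(\<Inter>\<gamma>\<in>H. {x \<in> rat_dual. rho \<gamma> x \<in> U}) = {\<lambda>_. 1}"
    using ex unfolding expansive_def by blast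
  obtain V where V: "open V" "(\<lambda>_. 1) \<in> V" "V \<inter> rat_dual \<subseteq> U" using U(2) by blast
  obtain F where F: "finite F" "\<And>f. (\<forall>x\<in>F. f x = 1) \<Longrightarrow> f \<in> V"
    using nbhd_finite[OF V(1,2)] by auto
  have "\<forall>x. \<exists>m. \<forall>k\<ge>m. of_int p ^ k * x \<in> Zp p" using pow_Zp[OF pp] by blast
  then obtain M where M: "\<And>x k. k \<ge> M x \<Longrightarrow> of_int p ^ k * x \<in> Zp p" by metis
  define k where "k = (\<Sum>x\<in>F. M x)"
  have kF: "of_int p ^ k * x \<in> Zp p" if "x \<in> F" for x
    using M[of x k] member_le_sum[of x F M] that F(1) unfolding k_def by simp
  define g where "g = (\<lambda>x. chi p (of_int p ^ k * x))"
  have gd: "g \<in> rat_dual" unfolding rat_dual_def g_def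
    using chi_add[OF pp] chi_norm[OF pp] by (simp add: distrib_left)
  have "g \<in> {x \<in> rat_dual. rho \<gamma> x \<in> U}" if "\<gamma> \<in> H" for \<gamma>
  proof -
    have gK: "\<gamma> \<in> Zp p" using that HK unfolding K_def by blast
    have "rho \<gamma> g \<in> V"
    proof (rule F(2), intro ballI)
      fix x assume "x \<in> F"
      have "rho \<gamma> g x = chi p (\<gamma> * (of_int p ^ k * x))" unfolding rho_def g_def
        by (simp add: algebra_simps)
      also have "\<dots> = 1" using chi_Zp[OF pp Zp_mult[OF pp gK kF[OF \<open>x \<in> F\<close>]]] .
      finally show "rho \<gamma> g x = 1" .
    qed
    then show ?thesis using V(3) rho_dual[OF gd] gd by blast
  qed
  then have "g \<in> (\<Inter>\<gamma>\<in>H. {x \<in> rat_dual. rho \<gamma> x \<in> U})" by blast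
  then have g1: "g = (\<lambda>_. 1)" using U(3) by blast
  have pq0: "(of_int p :: rat) \<noteq> 0" using pp by auto
  have "(of_int p ^ k * (1 / of_int p ^ Suc k) :: rat) = 1 / of_int p" using pq0 by simp
  then have "g (1 / of_int p ^ Suc k) = chi p (1 / of_int p)" unfolding g_def by simp
  then show False using g1 chi_inv[OF pp] by simp
qed


theorem mainTheorem18:
  shows "expansive {q::rat. q > 0} rho rat_dual (\<lambda>_. 1) \<and>
         (\<forall>\<Gamma>0. fg_pos_rat_subgroup \<Gamma>0 \<longrightarrow> \<not> expansive \<Gamma>0 rho rat_dual (\<lambda>_. 1))"
  using part1 part2 by blast

end
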